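(* Let $K,G,m_0,A_g,B_g,\bar f_c,\bar f_t>0$, $m_g'(p)=A_g e^{\frac{p-\bar f_t/3}{B_g\bar f_c}}$, $e\in[0.5,1]$, and let $p^{tr}\in\mathbb R$, $\varrho^{tr}\ge0$, $r_e^{tr}\in\mathbb R$. For $\gamma\ge0$ let $\hat p_{tr}(\gamma)$ be the unique real $p_\gamma$ with $p_\gamma+\gamma Km_g'(p_\gamma)/\bar f_c=p^{tr}$, let $\hat\varrho_{tr}(\gamma)=\frac{1}{1+\gamma 6G/\bar f_c^2}\big(\varrho^{tr}-\gamma\frac{2Gm_0}{\sqrt6\bar f_c}\big)^+$, and $q_{tr}(\gamma)=\frac32\big(\frac{\hat\varrho_{tr}(\gamma)}{\bar f_c}\big)^2+m_0\big(\frac{\hat\varrho_{tr}(\gamma)r_e^{tr}}{\sqrt6\bar f_c}+\frac{\hat p_{tr}(\gamma)}{\bar f_c}\big)-1$. Then, with $p^a=\bar f_c/m_0$, $$q_{tr}\Big(\frac{\sqrt6\bar f_c\varrho^{tr}}{2Gm_0}\Big)\ge0\quad\text{if and only if}\quad p^{tr}-\frac{\sqrt6K}{2G}\frac{m_g'(p^a)}{m_0}\varrho^{tr}-p^a\ge0.$$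
   Context: $(x)^+=\max\{0,x\}$. In the paper, $p^{tr},\varrho^{tr},r_e^{tr}$ are the hydrostatic stress, deviatoric norm and Lode-angle function value of a trial stress, but the claim only uses them as the numbers specified. *)

theory Defs
  imports Complex_Main
begin

definition pos_part :: "real \<Rightarrow> real" where
  "pos_part x = max 0 x"

definition mg' :: "real \<Rightarrow> real \<Rightarrow> real \<Rightarrow> real \<Rightarrow> real \<Rightarrow> real" where
  "mg' Ag Bg fc ft p = Ag * exp ((p - ft / 3) / (Bg * fc))"

definition p_hat :: "real \<Rightarrow> real \<Rightarrow> real \<Rightarrow> real \<Rightarrow> real \<Rightarrow> real \<Rightarrow> real \<Rightarrow> real" where
  "p_hat K Ag Bg fc ft ptr \<gamma> =
     (THE p. p + \<gamma> * K * mg' Ag Bg fc ft p / fc = ptr)"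

definition rho_hat :: "real \<Rightarrow> real \<Rightarrow> real \<Rightarrow> real \<Rightarrow> real \<Rightarrow> real" where
  "rho_hat G m0 fc rtr \<gamma> =
     (1 / (1 + \<gamma> * 6 * G / fc^2)) * pos_part (rtr - \<gamma> * (2 * G * m0 / (sqrt 6 * fc)))"

definition q_tr :: "real \<Rightarrow> real \<Rightarrow> real \<Rightarrow> real \<Rightarrow> real \<Rightarrow> real \<Rightarrow> real \<Rightarrow> real \<Rightarrow> real \<Rightarrow> real \<Rightarrow> real \<Rightarrow> real" where
  "q_tr K G m0 Ag Bg fc ft ptr rtr retr \<gamma> =
     (let r = rho_hat G m0 fc rtr \<gamma>; p = p_hat K Ag Bg fc ft ptr \<gamma>
      in 3/2 * (r / fc)^2 + m0 * (r * retr / (sqrt 6 * fc) + p / fc) - 1)"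

end

theory Submission
  imports Defs
begin

lemma mg'_mono:
  assumes "Ag > 0" "Bg > 0" "fc > 0" "x \<le> y"
  shows "mg' Ag Bg fc ft x \<le> mg' Ag Bg fc ft y"
  using assms by (simp add: mg'_def divide_right_mono)

lemma mg'_strict:
  assumes "Ag > 0" "Bg > 0" "fc > 0" "x < y"
  shows "mg' Ag Bg fc ft x < mg' Ag Bg fc ft y"
  using assms by (simp add: mg'_def divide_strict_right_mono)

lemma h_strict:
  assumes "Ag > 0" "Bg > 0" "fc > 0" "c \<ge> 0" "x < y"
  shows "x + c * mg' Ag Bg fc ft x < y + c * mg' Ag Bg fc ft y"
proof -
  have "c * mg' Ag Bg fc ft x \<le> c * mg' Ag Bg fc ft y"
    using mg'_mono[OF assms(1-3), of x y ft] assms by (simp add: mult_left_mono)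
  thus ?thesis using assms(5) by linarith
qed

lemma p_hat_char:
  assumes "Ag > 0" "Bg > 0" "fc > 0" "K > 0" "\<gamma> \<ge> 0"
  shows "p_hat K Ag Bg fc ft ptr \<gamma> + (\<gamma> * K / fc) * mg' Ag Bg fc ft (p_hat K Ag Bg fc ft ptr \<gamma>) = ptr"
proof -
  define c where "c = \<gamma> * K / fc"
  have c0: "c \<ge> 0" using assms by (simp add: c_def)
  define h where "h = (\<lambda>p. p + c * mg' Ag Bg fc ft p)"
  have eq: "\<And>p. (p + \<gamma> * K * mg' Ag Bg fc ft p / fc = ptr) = (h p = ptr)"
    by (simp add: h_def c_def)
  define p0 where "p0 = ptr - c * mg' Ag Bg fc ft ptr"
  have le: "p0 \<le> ptr" using c0 assms by (simp add: p0_def mg'_def)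
  have "mg' Ag Bg fc ft p0 \<le> mg' Ag Bg fc ft ptr" using mg'_mono[OF assms(1-3) le] .
  hence h0: "h p0 \<le> ptr" using c0 unfolding h_def p0_def
    by (smt (verit) mult_left_mono)
  have h1: "ptr \<le> h ptr" using c0 assms by (simp add: h_def mg'_def)
  have cont: "continuous_on {p0..ptr} h" unfolding h_def mg'_def
    using assms by (intro continuous_intros) auto
  obtain x where x: "h x = ptr" using IVT'[of h p0 ptr ptr, OF h0 h1 le cont] by blast
  have uniq: "\<And>y. h y = ptr \<Longrightarrow> y = x"
  proof -
    fix y assume "h y = ptr"
    thus "y = x" using x h_strict[OF assms(1-3) c0, of x y ft] h_strict[OF assms(1-3) c0, of y x ft]
      unfolding h_def by (metis linorder_neqE_linordered_idom order_less_irrefl)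
  qed
  have "p_hat K Ag Bg fc ft ptr \<gamma> = x"
    unfolding p_hat_def eq using x uniq by (rule the_equality)
  thus ?thesis using x by (simp add: h_def c_def)
qed

theorem lemma2:
  fixes K G m0 Ag Bg fc ft e ptr rtr retr :: real
  assumes "K > 0" "G > 0" "m0 > 0" "Ag > 0" "Bg > 0" "fc > 0" "ft > 0"
    and "0.5 \<le> e" "e \<le> 1"
    and "rtr \<ge> 0"
  shows "q_tr K G m0 Ag Bg fc ft ptr rtr retr (sqrt 6 * fc * rtr / (2 * G * m0)) \<ge> 0
     \<longleftrightarrow> ptr - sqrt 6 * K / (2 * G) * (mg' Ag Bg fc ft (fc / m0) / m0) * rtr - fc / m0 \<ge> 0"
proof -
  define g where "g = sqrt 6 * fc * rtr / (2 * G * m0)"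
  have g0: "g \<ge> 0" using assms by (simp add: g_def)
  have r0: "rho_hat G m0 fc rtr g = 0"
  proof -
    have "g * (2 * G * m0 / (sqrt 6 * fc)) = rtr" using assms by (simp add: g_def field_simps)
    thus ?thesis by (simp add: rho_hat_def pos_part_def)
  qed
  define p where "p = p_hat K Ag Bg fc ft ptr g"
  define c where "c = g * K / fc"
  have c0: "c \<ge> 0" using g0 assms by (simp add: c_def)
  have hp: "p + c * mg' Ag Bg fc ft p = ptr"
    using p_hat_char[OF assms(4,5,6,1) g0] by (simp add: p_def c_def)
  have q: "q_tr K G m0 Ag Bg fc ft ptr rtr retr g = m0 * (p / fc) - 1"
    by (simp add: q_tr_def r0 p_def Let_def)
  have "(m0 * (p / fc) - 1 \<ge> 0) = (p \<ge> fc / m0)" using assms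
    by (simp add: field_simps)
  also have "\<dots> = (ptr \<ge> fc/m0 + c * mg' Ag Bg fc ft (fc/m0))"
    using h_strict[OF assms(4,5,6) c0, of p "fc/m0" ft] h_strict[OF assms(4,5,6) c0, of "fc/m0" p ft] hp
    by (metis linorder_not_le order_le_less order_less_irrefl)
  also have "c * mg' Ag Bg fc ft (fc/m0) = sqrt 6 * K / (2 * G) * (mg' Ag Bg fc ft (fc / m0) / m0) * rtr"
    using assms by (simp add: c_def g_def field_simps)
  finally show ?thesis using q by (simp add: g_def) linarith
qed

end
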